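(* Let $\tau$ be a row-standard tableau. Then there exists a sequence of integers $i_1,\dots,i_m$ such that $\mathrm{st}(\tau)=\delta_{i_1}\cdots\delta_{i_m}(\tau)$ (each $\delta_{i_k}$ being applied to a tableau lying in $D_{i_k}$), and $n_{\mathrm{inv}}(\tau)$ is the minimal length $m$ of such a sequence.
   Context: Fix a Young diagram $Y$ with $n$ boxes. A row-standard tableau of shape $Y$ is a bijective numbering of its boxes by $1,\dots,n$ increasing left to right along rows; it is standard if also increasing top to bottom along columns. The standardization $\mathrm{st}(\tau)$ of a row-standard $\tau$ is the standard tableau obtained by rearranging the entries of each column of $\tau$ in increasing order from top to bottom. An inversion of $\tau$ is a pair $i<j$ in the same column such that either (i) $i$ or $j$ has no box immediately to its right and $i$ is below $j$, or (ii) $i,j$ have right neighbours $i',j'$ with $i'>j'$; $n_{\mathrm{inv}}(\tau)$ is their number. For $i\in\{1,\dots,n\}$, $D_i$ is the set of row-standard $\tau$ such that: (1) $i$ is not in the first row, and letting $j$ be the entry immediately above $i$: (2) if $i$ has a right neighbour $i'$ then $j<i'$, and if $j$ has a right neighbour $j'$ then $i<j'$; (3) for every $k$ in the same column as $i,j$ with $\min(i,j)<k<\max(i,j)$, exactly one of $(\min(i,j),k)$, $(k,\max(i,j))$ is an inversion. For $\tau\in D_i$, with $i_1<\dots<i_q=i$ the entries of the row of $i$ up to $i$ and $j_1<\dots<j_q=j$ those of the row of $j$ up to $j$, $\delta_i(\tau)$ is obtained by swapping $i_k$ and $j_k$ for all $k\le q$. *)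

theory Defs
  imports Main
begin

text \<open>Row 0 is the first (top) row; boxes are pairs (row, column),
columns indexed from 0. Tableaux are maps from boxes to entries, with value 0
outside the diagram (so that tableaux are compared as functions).\<close>

type_synonym tableau = "nat \<times> nat \<Rightarrow> nat"

definition young_diagram :: "nat list \<Rightarrow> bool" where
  "young_diagram Y \<longleftrightarrow> sorted (rev Y) \<and> (\<forall>l\<in>set Y. 0 < l)"

definition boxes :: "nat list \<Rightarrow> (nat \<times> nat) set" where
  "boxes Y = {(r, c). r < length Y \<and> c < Y ! r}"

definition size_yd :: "nat list \<Rightarrow> nat" where
  "size_yd Y = sum_list Y"

definition tableau :: "nat list \<Rightarrow> tableau \<Rightarrow> bool" where
  "tableau Y \<tau> \<longleftrightarrow> bij_betw \<tau> (boxes Y) {1..size_yd Y} \<and> (\<forall>b. b \<notin> boxes Y \<longrightarrow> \<tau> b = 0)"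

definition row_standard :: "nat list \<Rightarrow> tableau \<Rightarrow> bool" where
  "row_standard Y \<tau> \<longleftrightarrow> tableau Y \<tau> \<and>
     (\<forall>r c. (r, Suc c) \<in> boxes Y \<longrightarrow> \<tau> (r, c) < \<tau> (r, Suc c))"

definition col_entries :: "nat list \<Rightarrow> tableau \<Rightarrow> nat \<Rightarrow> nat set" where
  "col_entries Y \<tau> c = {\<tau> (r, c) | r. (r, c) \<in> boxes Y}"

definition st :: "nat list \<Rightarrow> tableau \<Rightarrow> tableau" where
  "st Y \<tau> = (\<lambda>(r, c). if (r, c) \<in> boxes Y
      then sorted_list_of_set (col_entries Y \<tau> c) ! r else 0)"

definition inversion_boxes :: "nat list \<Rightarrow> tableau \<Rightarrow> nat \<times> nat \<Rightarrow> nat \<times> nat \<Rightarrow> bool" where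
  "inversion_boxes Y \<tau> b1 b2 \<longleftrightarrow>
     b1 \<in> boxes Y \<and> b2 \<in> boxes Y \<and> snd b1 = snd b2 \<and> \<tau> b1 < \<tau> b2 \<and>
     ( (((fst b1, Suc (snd b1)) \<notin> boxes Y \<or> (fst b2, Suc (snd b2)) \<notin> boxes Y)
          \<and> fst b1 > fst b2)
     \<or> ((fst b1, Suc (snd b1)) \<in> boxes Y \<and> (fst b2, Suc (snd b2)) \<in> boxes Y
          \<and> \<tau> (fst b1, Suc (snd b1)) > \<tau> (fst b2, Suc (snd b2))))"

definition is_inversion :: "nat list \<Rightarrow> tableau \<Rightarrow> nat \<Rightarrow> nat \<Rightarrow> bool" where
  "is_inversion Y \<tau> i j \<longleftrightarrow>
     (\<exists>b1 b2. inversion_boxes Y \<tau> b1 b2 \<and> \<tau> b1 = i \<and> \<tau> b2 = j)"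

definition n_inv :: "nat list \<Rightarrow> tableau \<Rightarrow> nat" where
  "n_inv Y \<tau> = card {(b1, b2). inversion_boxes Y \<tau> b1 b2}"

definition D :: "nat list \<Rightarrow> nat \<Rightarrow> tableau set" where
  "D Y i = {\<tau>. row_standard Y \<tau> \<and>
     (\<exists>r c. (r, c) \<in> boxes Y \<and> \<tau> (r, c) = i \<and> 0 < r \<and>
        (let j = \<tau> (r - 1, c) in
          ((r, Suc c) \<in> boxes Y \<longrightarrow> j < \<tau> (r, Suc c)) \<and>
          ((r - 1, Suc c) \<in> boxes Y \<longrightarrow> i < \<tau> (r - 1, Suc c)) \<and>
          (\<forall>k \<in> col_entries Y \<tau> c. min i j < k \<and> k < max i j \<longrightarrow>
             (is_inversion Y \<tau> (min i j) k \<noteq> is_inversion Y \<tau> k (max i j)))))}"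

definition pos :: "nat list \<Rightarrow> tableau \<Rightarrow> nat \<Rightarrow> nat \<times> nat" where
  "pos Y \<tau> i = (THE b. b \<in> boxes Y \<and> \<tau> b = i)"

definition delta :: "nat list \<Rightarrow> nat \<Rightarrow> tableau \<Rightarrow> tableau" where
  "delta Y i \<tau> = (let (r, c) = pos Y \<tau> i in
     (\<lambda>(r', c'). if r' = r \<and> c' \<le> c then \<tau> (r - 1, c')
                 else if r' = r - 1 \<and> c' \<le> c then \<tau> (r, c')
                 else \<tau> (r', c')))"

text \<open>delta_seq Y [i1,...,im] \<tau> \<sigma>: \<sigma> = delta_i1 (... (delta_im \<tau>)), where each
delta_ik is applied to a tableau lying in D_ik.\<close>
fun delta_seq :: "nat list \<Rightarrow> nat list \<Rightarrow> tableau \<Rightarrow> tableau \<Rightarrow> bool" where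
  "delta_seq Y [] \<tau> \<sigma> \<longleftrightarrow> \<sigma> = \<tau>"
| "delta_seq Y (i # ws) \<tau> \<sigma> \<longleftrightarrow>
     (\<exists>\<rho>. delta_seq Y ws \<tau> \<rho> \<and> \<rho> \<in> D Y i \<and> \<sigma> = delta Y i \<rho>)"

end

theory Submission imports Defs begin

lemma young_down:
  assumes "young_diagram Y" "(r, c) \<in> boxes Y" "s \<le> r"
  shows "(s, c) \<in> boxes Y"
proof -
  have "sorted (rev Y)" using assms(1) by (simp add: young_diagram_def)
  moreover have "r < length Y" "c < Y ! r" using assms(2) by (auto simp: boxes_def)
  ultimately have "Y ! r \<le> Y ! s" using assms(3) sorted_rev_nth_mono by blast
  thus ?thesis using assms(2,3) by (auto simp: boxes_def)
qed

lemma box_left: "(r, c) \<in> boxes Y \<Longrightarrow> c' \<le> c \<Longrightarrow> (r, c') \<in> boxes Y"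
  by (auto simp: boxes_def)

lemma finite_boxes: "finite (boxes Y)"
proof -
  have "boxes Y \<subseteq> {..<length Y} \<times> {..<Max (insert 0 (set Y))}"
    by (auto simp: boxes_def intro!: less_le_trans[OF _ Max_ge])
  thus ?thesis by (rule finite_subset) auto
qed

lemma tab_inj: "tableau Y \<tau> \<Longrightarrow> inj_on \<tau> (boxes Y)"
  by (simp add: tableau_def bij_betw_def)

lemma sorted_nth_card:
  fixes S :: "nat set"
  assumes "finite S" "x \<in> S"
  shows "sorted_list_of_set S ! card {y\<in>S. y < x} = x"
proof -
  define xs where "xs = sorted_list_of_set S"
  have ss: "sorted_wrt (<) xs" and sx: "set xs = S" and so: "sorted xs"
    using assms(1) by (auto simp: xs_def strict_sorted_list_of_set)
  have dx: "distinct xs" using ss strict_sorted_iff by blast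
  obtain k where k: "k < length xs" "xs ! k = x" using assms(2) sx by (metis in_set_conv_nth)
  have "{y\<in>S. y < x} = (\<lambda>m. xs ! m) ` {..<k}"
  proof (intro equalityI subsetI)
    fix y assume "y \<in> {y\<in>S. y < x}"
    then obtain m where m: "m < length xs" "xs ! m = y" "y < x" using sx by (auto simp: in_set_conv_nth)
    have "m < k"
    proof (rule ccontr)
      assume "\<not> m < k" then have "xs ! k \<le> xs ! m" using sorted_nth_mono[OF so] m by auto
      thus False using m k by auto
    qed
    thus "y \<in> (\<lambda>m. xs ! m) ` {..<k}" using m by auto
  next
    fix y assume "y \<in> (\<lambda>m. xs ! m) ` {..<k}"
    then obtain m where "m < k" "y = xs ! m" by auto
    thus "y \<in> {y\<in>S. y < x}" using sorted_wrt_nth_less[OF ss] k sx by auto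
  qed
  moreover have "inj_on (\<lambda>m. xs ! m) {..<k}" using dx k by (auto simp: inj_on_def nth_eq_iff_index_eq)
  ultimately have "card {y\<in>S. y < x} = k" by (simp add: card_image)
  thus ?thesis using k xs_def by simp
qed


definition col_incr :: "nat list \<Rightarrow> tableau \<Rightarrow> nat \<Rightarrow> bool" where
  "col_incr Y \<tau> c \<longleftrightarrow> (\<forall>r. (Suc r, c) \<in> boxes Y \<longrightarrow> \<tau> (r, c) < \<tau> (Suc r, c))"

lemma col_incr_global:
  assumes "young_diagram Y" "col_incr Y \<tau> c" "(t, c) \<in> boxes Y" "s < t"
  shows "\<tau> (s, c) < \<tau> (t, c)"
  using assms(3,4)
proof (induction t)
  case 0 then show ?case by simp
next
  case (Suc t)
  have h: "\<tau> (t, c) < \<tau> (Suc t, c)" using assms(2) Suc.prems by (simp add: col_incr_def)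
  show ?case
  proof (cases "s = t")
    case True then show ?thesis using h by simp
  next
    case False
    then have "s < t" using Suc.prems by simp
    moreover have "(t, c) \<in> boxes Y" using young_down[OF assms(1) Suc.prems(1)] by simp
    ultimately show ?thesis using Suc.IH h by simp
  qed
qed

definition K :: "nat list \<Rightarrow> tableau \<Rightarrow> nat \<times> nat \<Rightarrow> nat \<times> nat \<Rightarrow> bool" where
  "K Y \<tau> b1 b2 \<longleftrightarrow>
     (((fst b1, Suc (snd b1)) \<notin> boxes Y \<or> (fst b2, Suc (snd b2)) \<notin> boxes Y)
          \<and> fst b1 > fst b2)
     \<or> ((fst b1, Suc (snd b1)) \<in> boxes Y \<and> (fst b2, Suc (snd b2)) \<in> boxes Y
          \<and> \<tau> (fst b1, Suc (snd b1)) > \<tau> (fst b2, Suc (snd b2)))"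

lemma inv_K: "inversion_boxes Y \<tau> b1 b2 \<longleftrightarrow>
   b1 \<in> boxes Y \<and> b2 \<in> boxes Y \<and> snd b1 = snd b2 \<and> \<tau> b1 < \<tau> b2 \<and> K Y \<tau> b1 b2"
  by (simp add: inversion_boxes_def K_def)

definition standard :: "nat list \<Rightarrow> tableau \<Rightarrow> bool" where
  "standard Y \<tau> \<longleftrightarrow> (\<forall>c. col_incr Y \<tau> c)"

lemma standard_no_inv:
  assumes "young_diagram Y" "standard Y \<tau>"
  shows "\<not> inversion_boxes Y \<tau> b1 b2"
proof
  assume iv: "inversion_boxes Y \<tau> b1 b2"
  obtain a c b c' where bb: "b1 = (a, c)" "b2 = (b, c')" by (cases b1, cases b2)
  have cc: "c' = c" and b1: "(a,c) \<in> boxes Y" and b2: "(b,c) \<in> boxes Y" and lt: "\<tau> (a,c) < \<tau> (b,c)"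
    and k: "K Y \<tau> (a,c) (b,c)"
    using iv bb by (auto simp: inv_K)
  have ci: "\<And>c. col_incr Y \<tau> c" using assms(2) by (simp add: standard_def)
  have "\<not> b < a" using col_incr_global[OF assms(1) ci b1] lt by (metis not_less_iff_gr_or_eq)
  moreover have "a \<noteq> b" using lt by auto
  ultimately have ab: "a < b" by simp
  show False
  proof (cases "(a, Suc c) \<in> boxes Y \<and> (b, Suc c) \<in> boxes Y")
    case True
    then have "\<tau> (a, Suc c) < \<tau> (b, Suc c)" using col_incr_global[OF assms(1) ci _ ab] by blast
    then show False using k True by (auto simp: K_def)
  next
    case False
    then show False using k ab by (auto simp: K_def)
  qed
qed

lemma standard_ninv:
  assumes "young_diagram Y" "standard Y \<tau>"
  shows "n_inv Y \<tau> = 0"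
  using standard_no_inv[OF assms] by (simp add: n_inv_def)

lemma standard_st:
  assumes "young_diagram Y" "standard Y \<tau>" "tableau Y \<tau>"
  shows "st Y \<tau> = \<tau>"
proof (rule ext, clarify)
  fix r c
  show "st Y \<tau> (r, c) = \<tau> (r, c)"
  proof (cases "(r, c) \<in> boxes Y")
    case False
    then show ?thesis using assms(3) by (simp add: st_def tableau_def)
  next
    case True
    have ci: "col_incr Y \<tau> c" using assms(2) by (simp add: standard_def)
    let ?S = "col_entries Y \<tau> c"
    have fin: "finite ?S"
    proof -
      have "?S = (\<lambda>b. \<tau> b) ` {b \<in> boxes Y. snd b = c}" by (auto simp: col_entries_def)
      thus ?thesis using finite_boxes by simp
    qed
    have mem: "\<tau> (r, c) \<in> ?S" using True by (auto simp: col_entries_def)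
    have eq: "{y \<in> ?S. y < \<tau> (r, c)} = (\<lambda>s. \<tau> (s, c)) ` {..<r}"
    proof (intro equalityI subsetI)
      fix y assume "y \<in> {y \<in> ?S. y < \<tau> (r, c)}"
      then obtain s where s: "(s, c) \<in> boxes Y" "y = \<tau> (s, c)" "y < \<tau> (r, c)"
        by (auto simp: col_entries_def)
      have "s < r"
      proof (rule ccontr)
        assume "\<not> s < r"
        then have "s = r \<or> r < s" by auto
        thus False using col_incr_global[OF assms(1) ci s(1), of r] s by auto
      qed
      thus "y \<in> (\<lambda>s. \<tau> (s, c)) ` {..<r}" using s by auto
    next
      fix y assume "y \<in> (\<lambda>s. \<tau> (s, c)) ` {..<r}"
      then obtain s where s: "s < r" "y = \<tau> (s, c)" by auto
      have "(s, c) \<in> boxes Y" using young_down[OF assms(1) True] s by simp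
      thus "y \<in> {y \<in> ?S. y < \<tau> (r, c)}"
        using s col_incr_global[OF assms(1) ci True s(1)] by (auto simp: col_entries_def)
    qed
    have inj: "inj_on (\<lambda>s. \<tau> (s, c)) {..<r}"
    proof (rule inj_onI)
      fix s t assume "s \<in> {..<r}" "t \<in> {..<r}" "\<tau> (s, c) = \<tau> (t, c)"
      moreover have "(s,c) \<in> boxes Y" "(t,c) \<in> boxes Y"
        using young_down[OF assms(1) True] calculation by auto
      ultimately show "s = t" using tab_inj[OF assms(3)] by (auto dest: inj_onD)
    qed
    have "card {y \<in> ?S. y < \<tau> (r, c)} = r" using eq inj by (simp add: card_image)
    then show ?thesis using sorted_nth_card[OF fin mem] True by (simp add: st_def)
  qed
qed


definition sw :: "nat \<Rightarrow> nat \<Rightarrow> nat \<times> nat \<Rightarrow> nat \<times> nat" where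
  "sw r c = (\<lambda>(a, b). if a = r \<and> b \<le> c then (r - 1, b)
                       else if a = r - 1 \<and> b \<le> c then (r, b) else (a, b))"

locale swc =
  fixes Y :: "nat list" and \<rho> :: tableau and r c :: nat
  assumes yd: "young_diagram Y" and rs: "row_standard Y \<rho>"
    and pb: "(r, c) \<in> boxes Y" and rpos: "0 < r"
begin

abbreviation "B \<equiv> boxes Y"
abbreviation "\<pi> \<equiv> sw r c"
abbreviation "\<sigma> \<equiv> \<rho> \<circ> sw r c"

lemma qb: "(r - 1, c) \<in> B" using young_down[OF yd pb] by simp

lemma rowsB: "b \<le> c \<Longrightarrow> (r, b) \<in> B \<and> (r - 1, b) \<in> B"
  using box_left[OF pb] box_left[OF qb] by auto

lemma sw_snd[simp]: "snd (\<pi> x) = snd x"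
  by (cases x) (auto simp: sw_def)

lemma sw_sw[simp]: "\<pi> (\<pi> x) = x"
  using rpos by (cases x) (auto simp: sw_def)

lemma sw_out: "x \<notin> B \<Longrightarrow> \<pi> x = x"
  using rowsB by (cases x) (auto simp: sw_def)

lemma sw_in: "x \<in> B \<Longrightarrow> \<pi> x \<in> B"
  using rowsB by (cases x) (auto simp: sw_def)

lemma sw_bij: "bij_betw \<pi> B B"
  by (rule bij_betw_byWitness[where f'="\<pi>"]) (auto simp: sw_in)

lemma sw_p[simp]: "\<pi> (r, c) = (r - 1, c)" and sw_q[simp]: "\<pi> (r - 1, c) = (r, c)"
  using rpos by (auto simp: sw_def)

lemma tab: "tableau Y \<rho>" using rs by (simp add: row_standard_def)

lemma delta_eq:
  assumes "\<rho> (r, c) = i"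
  shows "delta Y i \<rho> = \<sigma>"
proof -
  have "pos Y \<rho> i = (r, c)"
    unfolding pos_def
  proof (rule the_equality)
    show "(r, c) \<in> B \<and> \<rho> (r, c) = i" using pb assms by simp
    fix b assume "b \<in> B \<and> \<rho> b = i"
    thus "b = (r, c)" using tab_inj[OF tab] pb assms by (auto dest: inj_onD)
  qed
  thus ?thesis by (auto simp: delta_def sw_def fun_eq_iff)
qed

lemma sigma_tab: "tableau Y \<sigma>"
proof -
  have "bij_betw \<rho> B {1..size_yd Y}" using tab by (simp add: tableau_def)
  then have "bij_betw (\<rho> \<circ> \<pi>) B {1..size_yd Y}" using sw_bij bij_betw_trans by blast
  moreover have "\<forall>b. b \<notin> B \<longrightarrow> \<sigma> b = 0" using tab sw_out by (simp add: tableau_def)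
  ultimately show ?thesis by (simp add: tableau_def)
qed

lemma sigma_rs:
  assumes c2a: "(r, Suc c) \<in> B \<Longrightarrow> \<rho> (r - 1, c) < \<rho> (r, Suc c)"
    and c2b: "(r - 1, Suc c) \<in> B \<Longrightarrow> \<rho> (r, c) < \<rho> (r - 1, Suc c)"
  shows "row_standard Y \<sigma>"
proof -
  have rsr: "\<And>a b. (a, Suc b) \<in> B \<Longrightarrow> \<rho> (a, b) < \<rho> (a, Suc b)" using rs by (simp add: row_standard_def)
  have "\<sigma> (a, b) < \<sigma> (a, Suc b)" if ab: "(a, Suc b) \<in> B" for a b
  proof -
    consider "Suc b \<le> c" | "b = c" | "c < b" by linarith
    then show ?thesis
    proof cases
      case 1
      then show ?thesis using rowsB[OF 1] rsr ab rpos by (auto simp: sw_def)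
    next
      case 2
      then show ?thesis using c2a c2b rsr ab rpos by (auto simp: sw_def)
    next
      case 3
      then show ?thesis using rsr ab by (auto simp: sw_def)
    qed
  qed
  thus ?thesis using sigma_tab by (simp add: row_standard_def)
qed

lemma sigma_col: "col_entries Y \<sigma> c' = col_entries Y \<rho> c'"
proof (intro equalityI subsetI)
  fix v assume "v \<in> col_entries Y \<sigma> c'"
  then obtain a where a: "(a, c') \<in> B" "v = \<rho> (\<pi> (a, c'))" by (auto simp: col_entries_def)
  obtain a' where "\<pi> (a, c') = (a', c')" by (metis prod.collapse sw_snd snd_conv)
  thus "v \<in> col_entries Y \<rho> c'" using a sw_in[OF a(1)] by (auto simp: col_entries_def)
next
  fix v assume "v \<in> col_entries Y \<rho> c'"
  then obtain a where a: "(a, c') \<in> B" "v = \<rho> (a, c')" by (auto simp: col_entries_def)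
  obtain a' where e: "\<pi> (a, c') = (a', c')" by (metis prod.collapse sw_snd snd_conv)
  have "\<sigma> (a', c') = v" using e a by (metis comp_apply sw_sw)
  thus "v \<in> col_entries Y \<sigma> c'" using sw_in[OF a(1)] e by (auto simp: col_entries_def)
qed

lemma sigma_st: "st Y \<sigma> = st Y \<rho>"
  unfolding st_def sigma_col ..

end
context swc begin

lemma local_eq:
  assumes xb: "(a, b) \<in> B" and yb: "(a', b') \<in> B"
    and nx: "\<not> (b = c \<and> b' = c \<and> (a \<in> {r, r - 1} \<or> a' \<in> {r, r - 1}))"
  shows "inversion_boxes Y \<sigma> (a, b) (a', b') \<longleftrightarrow> inversion_boxes Y \<rho> (\<pi> (a, b)) (\<pi> (a', b'))"
proof (cases "b' = b")
  case False
  then show ?thesis by (auto simp: inv_K sw_def)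
next
  case True
  note bb = True
  consider "c < b" | "b = c" | "b < c" by linarith
  then show ?thesis
  proof cases
    case 1
    then show ?thesis using xb yb bb by (simp add: inv_K K_def sw_def)
  next
    case 2
    then have "a \<notin> {r, r - 1}" "a' \<notin> {r, r - 1}" using nx bb by auto
    then show ?thesis using xb yb bb 2 by (simp add: inv_K K_def sw_def)
  next
    case 3
    have R: "(r, Suc b) \<in> B" "(r - 1, Suc b) \<in> B" "(r, b) \<in> B" "(r - 1, b) \<in> B"
      using rowsB[of "Suc b"] rowsB[of b] 3 by auto
    show ?thesis using xb yb bb 3 R rpos by (auto simp: inv_K K_def sw_def)
  qed
qed

end

definition iota :: "nat list \<Rightarrow> tableau \<Rightarrow> (nat \<times> nat) \<times> (nat \<times> nat) \<Rightarrow> int" where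
  "iota Y \<tau> z = (if inversion_boxes Y \<tau> (fst z) (snd z) then 1 else 0)"

lemma ninv_sum: "int (n_inv Y \<tau>) = (\<Sum>z\<in>boxes Y \<times> boxes Y. iota Y \<tau> z)"
proof -
  have e: "{(b1, b2). inversion_boxes Y \<tau> b1 b2} = {z \<in> boxes Y \<times> boxes Y. inversion_boxes Y \<tau> (fst z) (snd z)}"
    by (auto simp: inv_K)
  have fin: "finite (boxes Y \<times> boxes Y)" using finite_boxes by simp
  show ?thesis unfolding n_inv_def e iota_def
    by (subst sum.inter_filter[OF fin, symmetric]) simp
qed

lemma K_total:
  assumes "tableau Y \<tau>" "x \<in> boxes Y" "y \<in> boxes Y" "snd x = snd y" "x \<noteq> y"
  shows "K Y \<tau> x y \<or> K Y \<tau> y x"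
proof -
  obtain a b a' where xy: "x = (a, b)" "y = (a', b)" using assms(4) by (metis prod.collapse)
  have "a \<noteq> a'" using xy assms(5) by auto
  moreover have "(a, Suc b) \<in> boxes Y \<Longrightarrow> (a', Suc b) \<in> boxes Y \<Longrightarrow> \<tau> (a, Suc b) \<noteq> \<tau> (a', Suc b)"
    using calculation tab_inj[OF assms(1)] by (auto dest: inj_onD)
  ultimately show ?thesis using xy
    by (auto simp: K_def)
qed

lemma K_asym: "K Y \<tau> x y \<Longrightarrow> K Y \<tau> y x \<Longrightarrow> False"
  by (auto simp: K_def)

lemma inv_irrefl: "\<not> inversion_boxes Y \<tau> x x"
  by (simp add: inv_K)

context swc begin

abbreviation "Dl z \<equiv> iota Y \<sigma> z - iota Y \<rho> (map_prod \<pi> \<pi> z)"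

lemma diff_sum: "int (n_inv Y \<sigma>) - int (n_inv Y \<rho>) = (\<Sum>z\<in>B \<times> B. Dl z)"
proof -
  have "(\<Sum>z\<in>B \<times> B. iota Y \<rho> (map_prod \<pi> \<pi> z)) = (\<Sum>z\<in>B \<times> B. iota Y \<rho> z)"
    by (rule sum.reindex_bij_betw[OF bij_betw_map_prod[OF sw_bij sw_bij]])
  thus ?thesis by (simp add: ninv_sum sum_subtractf)
qed

lemma K_sig: "snd x = c \<Longrightarrow> snd y = c \<Longrightarrow> K Y \<sigma> x y \<longleftrightarrow> K Y \<rho> x y"
  by (cases x, cases y) (simp add: K_def sw_def)

end
context swc begin

lemma Dl_zero:
  assumes "x \<in> B" "y \<in> B" "\<not> (snd x = c \<and> snd y = c \<and> (x \<in> {(r, c), (r - 1, c)} \<or> y \<in> {(r, c), (r - 1, c)}))"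
  shows "Dl (x, y) = 0"
proof -
  obtain a b a' b' where xy: "x = (a, b)" "y = (a', b')" by (cases x, cases y)
  have "inversion_boxes Y \<sigma> (a, b) (a', b') \<longleftrightarrow> inversion_boxes Y \<rho> (\<pi> (a, b)) (\<pi> (a', b'))"
    using assms xy by (intro local_eq) auto
  thus ?thesis using xy by (simp add: iota_def)
qed

lemma change:
  assumes H3: "\<And>k. k \<in> B \<Longrightarrow> snd k = c \<Longrightarrow> k \<notin> {(r, c), (r - 1, c)} \<Longrightarrow>
      min (\<rho> (r, c)) (\<rho> (r - 1, c)) < \<rho> k \<Longrightarrow> \<rho> k < max (\<rho> (r, c)) (\<rho> (r - 1, c)) \<Longrightarrow>
      (K Y \<rho> (r, c) k \<longleftrightarrow> K Y \<rho> (r - 1, c) k)"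
  shows "int (n_inv Y \<sigma>) - int (n_inv Y \<rho>) =
     (if (\<rho> (r, c) < \<rho> (r - 1, c)) = K Y \<rho> (r, c) (r - 1, c) then -1 else 1)"
proof -
  define p where "p = (r, c)"
  define q where "q = (r - 1, c)"
  define R where "R = B - {p, q}"
  define g where "g x y = Dl (x, y)" for x y
  have pq: "p \<noteq> q" using rpos by (simp add: p_def q_def)
  have pB: "p \<in> B" and qB: "q \<in> B" using pb qb by (auto simp: p_def q_def)
  have Beq: "B = insert p (insert q R)" and pR: "p \<notin> R" and qR: "q \<notin> R" and finR: "finite R"
    using pB qB finite_boxes by (auto simp: R_def)
  have inj: "inj_on \<rho> B" using tab_inj[OF tab] .
  define i where "i = \<rho> p"
  define j where "j = \<rho> q"
  have ij: "i \<noteq> j" using inj pB qB pq by (auto simp: i_def j_def dest: inj_onD)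
  have sp: "\<sigma> p = j" and sq: "\<sigma> q = i" using sw_p sw_q by (auto simp: p_def q_def i_def j_def)
  have pip: "\<pi> p = q" and piq: "\<pi> q = p" using sw_p sw_q by (auto simp: p_def q_def)
  have "K Y \<rho> q p \<or> K Y \<rho> p q" using K_total[OF tab pB qB] pq by (auto simp: p_def q_def)
  then have Kqp: "K Y \<rho> q p \<longleftrightarrow> \<not> K Y \<rho> p q" by (meson K_asym)
  have zRR: "g x y = 0" if "x \<in> R" "y \<in> R" for x y
    unfolding g_def using that by (intro Dl_zero) (auto simp: R_def p_def q_def)
  have gpp: "g p p = 0" "g q q = 0" by (auto simp: g_def iota_def inv_irrefl pip piq)
  have brk: "g p k + g q k + g k p + g k q = 0" if kR: "k \<in> R" for k
  proof (cases "snd k = c")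
    case False
    have kB: "k \<in> B" using kR by (simp add: R_def)
    have "g p k = 0" unfolding g_def by (rule Dl_zero[OF pB kB]) (use False in auto)
    moreover have "g q k = 0" unfolding g_def by (rule Dl_zero[OF qB kB]) (use False in auto)
    moreover have "g k p = 0" unfolding g_def by (rule Dl_zero[OF kB pB]) (use False in auto)
    moreover have "g k q = 0" unfolding g_def by (rule Dl_zero[OF kB qB]) (use False in auto)
    ultimately show ?thesis by simp
  next
    case True
    have kB: "k \<in> B" using kR by (simp add: R_def)
    obtain s where ks: "k = (s, c)" using True by (metis prod.collapse)
    have sn: "s \<noteq> r" "s \<noteq> r - 1" using kR ks by (auto simp: R_def p_def q_def)
    have pik: "\<pi> k = k" using ks sn by (auto simp: sw_def)
    define v where "v = \<rho> k"
    have sk: "\<sigma> k = v" using pik by (simp add: v_def)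
    have kp: "k \<noteq> p" "k \<noteq> q" using kR by (auto simp: R_def)
    have vi: "v \<noteq> i" "v \<noteq> j" using inj kB pB qB kp by (auto simp: v_def i_def j_def dest: inj_onD)
    have "K Y \<rho> k p \<or> K Y \<rho> p k" using K_total[OF tab kB pB] kp True by (simp add: p_def)
    then have Kkp: "K Y \<rho> k p \<longleftrightarrow> \<not> K Y \<rho> p k" by (meson K_asym)
    have "K Y \<rho> k q \<or> K Y \<rho> q k" using K_total[OF tab kB qB] kp True by (simp add: q_def)
    then have Kkq: "K Y \<rho> k q \<longleftrightarrow> \<not> K Y \<rho> q k" by (meson K_asym)
    have h3: "min i j < v \<Longrightarrow> v < max i j \<Longrightarrow> (K Y \<rho> p k \<longleftrightarrow> K Y \<rho> q k)"
      using H3[OF kB True] kR by (auto simp: R_def p_def q_def i_def j_def v_def)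
    have cs: "snd p = c" "snd q = c" by (auto simp: p_def q_def)
    have e1: "inversion_boxes Y \<sigma> p k \<longleftrightarrow> j < v \<and> K Y \<rho> p k"
      using pB kB cs True sp sk K_sig by (auto simp: inv_K)
    have e2: "inversion_boxes Y \<sigma> q k \<longleftrightarrow> i < v \<and> K Y \<rho> q k"
      using qB kB cs True sq sk K_sig by (auto simp: inv_K)
    have e3: "inversion_boxes Y \<sigma> k p \<longleftrightarrow> v < j \<and> K Y \<rho> k p"
      using pB kB cs True sp sk K_sig by (auto simp: inv_K)
    have e4: "inversion_boxes Y \<sigma> k q \<longleftrightarrow> v < i \<and> K Y \<rho> k q"
      using qB kB cs True sq sk K_sig by (auto simp: inv_K)
    have f1: "inversion_boxes Y \<rho> q k \<longleftrightarrow> j < v \<and> K Y \<rho> q k"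
      using qB kB cs True by (auto simp: inv_K j_def v_def)
    have f2: "inversion_boxes Y \<rho> p k \<longleftrightarrow> i < v \<and> K Y \<rho> p k"
      using pB kB cs True by (auto simp: inv_K i_def v_def)
    have f3: "inversion_boxes Y \<rho> k q \<longleftrightarrow> v < j \<and> K Y \<rho> k q"
      using qB kB cs True by (auto simp: inv_K j_def v_def)
    have f4: "inversion_boxes Y \<rho> k p \<longleftrightarrow> v < i \<and> K Y \<rho> k p"
      using pB kB cs True by (auto simp: inv_K i_def v_def)
    have h3a: "i < v \<Longrightarrow> v < j \<Longrightarrow> (K Y \<rho> p k \<longleftrightarrow> K Y \<rho> q k)"
      and h3b: "j < v \<Longrightarrow> v < i \<Longrightarrow> (K Y \<rho> p k \<longleftrightarrow> K Y \<rho> q k)" using h3 by auto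
    show ?thesis
      unfolding g_def iota_def using pip piq pik e1 e2 e3 e4 f1 f2 f3 f4 Kkp Kkq h3a h3b vi ij
      by (simp split: if_splits) (metis linorder_neqE_nat order.strict_trans)
  qed
  have gpq: "g p q + g q p = (if (i < j) = K Y \<rho> p q then -1 else 1)"
  proof -
    have cs: "snd p = c" "snd q = c" by (auto simp: p_def q_def)
    have e1: "inversion_boxes Y \<sigma> p q \<longleftrightarrow> j < i \<and> K Y \<rho> p q"
      using pB qB cs sp sq K_sig by (auto simp: inv_K)
    have e2: "inversion_boxes Y \<sigma> q p \<longleftrightarrow> i < j \<and> K Y \<rho> q p"
      using pB qB cs sp sq K_sig by (auto simp: inv_K)
    have f1: "inversion_boxes Y \<rho> q p \<longleftrightarrow> j < i \<and> K Y \<rho> q p"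
      using pB qB cs by (auto simp: inv_K i_def j_def)
    have f2: "inversion_boxes Y \<rho> p q \<longleftrightarrow> i < j \<and> K Y \<rho> p q"
      using pB qB cs by (auto simp: inv_K i_def j_def)
    show ?thesis unfolding g_def iota_def using pip piq e1 e2 f1 f2 Kqp ij
      by (auto split: if_splits)
  qed
  have inner: "(\<Sum>y\<in>B. g x y) = g x p + g x q + (\<Sum>y\<in>R. g x y)" for x
    using Beq pR qR finR pq by simp
  have "(\<Sum>z\<in>B \<times> B. Dl z) = (\<Sum>x\<in>B. \<Sum>y\<in>B. g x y)"
    unfolding g_def sum.cartesian_product by (rule sum.cong) auto
  also have "\<dots> = (\<Sum>x\<in>B. g x p + g x q + (\<Sum>y\<in>R. g x y))" by (simp add: inner)
  also have "\<dots> = (g p p + g p q + (\<Sum>y\<in>R. g p y)) + (g q p + g q q + (\<Sum>y\<in>R. g q y))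
       + (\<Sum>x\<in>R. g x p + g x q + (\<Sum>y\<in>R. g x y))"
    using Beq pR qR finR pq by simp
  also have "(\<Sum>x\<in>R. g x p + g x q + (\<Sum>y\<in>R. g x y)) = (\<Sum>x\<in>R. g x p + g x q)"
    using zRR by (intro sum.cong) auto
  also have "(g p p + g p q + (\<Sum>y\<in>R. g p y)) + (g q p + g q q + (\<Sum>y\<in>R. g q y)) + (\<Sum>x\<in>R. g x p + g x q)
      = (g p q + g q p) + (\<Sum>k\<in>R. g p k + g q k + g k p + g k q)"
    using gpp by (simp add: sum.distrib algebra_simps)
  also have "(\<Sum>k\<in>R. g p k + g q k + g k p + g k q) = 0" using brk by simp
  finally have "(\<Sum>z\<in>B \<times> B. Dl z) = g p q + g q p" by (simp only: add.right_neutral)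
  thus ?thesis using diff_sum gpq by (simp add: p_def q_def i_def j_def)
qed

end

lemma is_inv_box:
  assumes "tableau Y \<tau>" "a \<in> boxes Y" "b \<in> boxes Y"
  shows "is_inversion Y \<tau> (\<tau> a) (\<tau> b) \<longleftrightarrow> inversion_boxes Y \<tau> a b"
proof
  assume "is_inversion Y \<tau> (\<tau> a) (\<tau> b)"
  then obtain b1 b2 where h: "inversion_boxes Y \<tau> b1 b2" "\<tau> b1 = \<tau> a" "\<tau> b2 = \<tau> b"
    by (auto simp: is_inversion_def)
  have "b1 \<in> boxes Y" "b2 \<in> boxes Y" using h(1) by (auto simp: inv_K)
  then have "b1 = a" "b2 = b" using h tab_inj[OF assms(1)] assms(2,3) by (auto dest: inj_onD)
  thus "inversion_boxes Y \<tau> a b" using h by simp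
qed (unfold is_inversion_def, blast)

context swc begin

lemma H3_from_D:
  assumes c3: "\<forall>k \<in> col_entries Y \<rho> c. min (\<rho> (r, c)) (\<rho> (r - 1, c)) < k \<and> k < max (\<rho> (r, c)) (\<rho> (r - 1, c)) \<longrightarrow>
             (is_inversion Y \<rho> (min (\<rho> (r, c)) (\<rho> (r - 1, c))) k \<noteq> is_inversion Y \<rho> k (max (\<rho> (r, c)) (\<rho> (r - 1, c))))"
    and kB: "k \<in> B" and kc: "snd k = c" and kn: "k \<notin> {(r, c), (r - 1, c)}"
    and lo: "min (\<rho> (r, c)) (\<rho> (r - 1, c)) < \<rho> k" and hi: "\<rho> k < max (\<rho> (r, c)) (\<rho> (r - 1, c))"
  shows "K Y \<rho> (r, c) k \<longleftrightarrow> K Y \<rho> (r - 1, c) k"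
proof -
  define p where "p = (r, c)"
  define q where "q = (r - 1, c)"
  have pB: "p \<in> B" and qB: "q \<in> B" using pb qb by (auto simp: p_def q_def)
  have kp: "k \<noteq> p" "k \<noteq> q" using kn by (auto simp: p_def q_def)
  have cs: "snd p = c" "snd q = c" by (auto simp: p_def q_def)
  have "K Y \<rho> k p \<or> K Y \<rho> p k" using K_total[OF tab kB pB] kp kc cs by simp
  then have Kkp: "K Y \<rho> k p \<longleftrightarrow> \<not> K Y \<rho> p k" by (meson K_asym)
  have "K Y \<rho> k q \<or> K Y \<rho> q k" using K_total[OF tab kB qB] kp kc cs by simp
  then have Kkq: "K Y \<rho> k q \<longleftrightarrow> \<not> K Y \<rho> q k" by (meson K_asym)
  have kcol: "\<rho> k \<in> col_entries Y \<rho> c" using kB kc by (cases k) (auto simp: col_entries_def)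
  have c3k: "is_inversion Y \<rho> (min (\<rho> p) (\<rho> q)) (\<rho> k) \<noteq> is_inversion Y \<rho> (\<rho> k) (max (\<rho> p) (\<rho> q))"
    using c3 kcol lo hi by (auto simp: p_def q_def)
  have ipk: "is_inversion Y \<rho> (\<rho> p) (\<rho> k) \<longleftrightarrow> inversion_boxes Y \<rho> p k" using is_inv_box[OF tab pB kB] .
  have iqk: "is_inversion Y \<rho> (\<rho> q) (\<rho> k) \<longleftrightarrow> inversion_boxes Y \<rho> q k" using is_inv_box[OF tab qB kB] .
  have ikp: "is_inversion Y \<rho> (\<rho> k) (\<rho> p) \<longleftrightarrow> inversion_boxes Y \<rho> k p" using is_inv_box[OF tab kB pB] .
  have ikq: "is_inversion Y \<rho> (\<rho> k) (\<rho> q) \<longleftrightarrow> inversion_boxes Y \<rho> k q" using is_inv_box[OF tab kB qB] .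
  have lo': "min (\<rho> p) (\<rho> q) < \<rho> k" and hi': "\<rho> k < max (\<rho> p) (\<rho> q)" using lo hi by (auto simp: p_def q_def)
  show ?thesis
  proof (cases "\<rho> p < \<rho> q")
    case True
    then have "inversion_boxes Y \<rho> p k \<noteq> inversion_boxes Y \<rho> k q" using c3k ipk ikq by (simp add: min_def max_def)
    moreover have "inversion_boxes Y \<rho> p k \<longleftrightarrow> K Y \<rho> p k" using pB kB cs kc lo' True by (simp add: inv_K)
    moreover have "inversion_boxes Y \<rho> k q \<longleftrightarrow> K Y \<rho> k q" using qB kB cs kc hi' True by (simp add: inv_K)
    ultimately show ?thesis using Kkq by (auto simp: p_def q_def)
  next
    case False
    then have F: "\<rho> q < \<rho> p" using lo' hi' by auto
    then have "inversion_boxes Y \<rho> q k \<noteq> inversion_boxes Y \<rho> k p" using c3k iqk ikp by (simp add: min_def max_def)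
    moreover have "inversion_boxes Y \<rho> q k \<longleftrightarrow> K Y \<rho> q k" using qB kB cs kc lo' F by (simp add: inv_K)
    moreover have "inversion_boxes Y \<rho> k p \<longleftrightarrow> K Y \<rho> k p" using pB kB cs kc hi' F by (simp add: inv_K)
    ultimately show ?thesis using Kkp by (auto simp: p_def q_def)
  qed
qed

end

lemma D_step:
  assumes yd: "young_diagram Y" and inD: "\<rho> \<in> D Y i"
  shows "row_standard Y (delta Y i \<rho>) \<and> st Y (delta Y i \<rho>) = st Y \<rho> \<and>
         n_inv Y \<rho> \<le> n_inv Y (delta Y i \<rho>) + 1"
proof -
  obtain r c where rs: "row_standard Y \<rho>" and pb: "(r, c) \<in> boxes Y" and ri: "\<rho> (r, c) = i" and rpos: "0 < r"
    and c2a: "(r, Suc c) \<in> boxes Y \<longrightarrow> \<rho> (r - 1, c) < \<rho> (r, Suc c)"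
    and c2b: "(r - 1, Suc c) \<in> boxes Y \<longrightarrow> i < \<rho> (r - 1, Suc c)"
    and c3: "\<forall>k \<in> col_entries Y \<rho> c. min i (\<rho> (r - 1, c)) < k \<and> k < max i (\<rho> (r - 1, c)) \<longrightarrow>
             (is_inversion Y \<rho> (min i (\<rho> (r - 1, c))) k \<noteq> is_inversion Y \<rho> k (max i (\<rho> (r - 1, c))))"
    using inD by (auto simp: D_def Let_def)
  interpret swc Y \<rho> r c using yd rs pb rpos by unfold_locales
  have de: "delta Y i \<rho> = \<sigma>" using delta_eq[OF ri] .
  have "row_standard Y \<sigma>" using sigma_rs c2a c2b ri by auto
  moreover have "int (n_inv Y \<sigma>) - int (n_inv Y \<rho>) =
     (if (\<rho> (r, c) < \<rho> (r - 1, c)) = K Y \<rho> (r, c) (r - 1, c) then -1 else 1)"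
    by (rule change, rule H3_from_D) (use c3 ri in auto)
  ultimately show ?thesis using de sigma_st by (auto split: if_splits)
qed


lemma exist_step:
  assumes yd: "young_diagram Y" and rs: "row_standard Y \<tau>" and ns: "\<not> standard Y \<tau>"
  shows "\<exists>i. \<tau> \<in> D Y i \<and> n_inv Y (delta Y i \<tau>) + 1 = n_inv Y \<tau> \<and>
             row_standard Y (delta Y i \<tau>) \<and> st Y (delta Y i \<tau>) = st Y \<tau>"
proof -
  define S where "S = {c. \<not> col_incr Y \<tau> c}"
  have Ssub: "S \<subseteq> snd ` boxes Y"
  proof
    fix c assume "c \<in> S"
    then obtain r where "(Suc r, c) \<in> boxes Y" by (auto simp: S_def col_incr_def)
    thus "c \<in> snd ` boxes Y" by force
  qed
  have finS: "finite S" using finite_subset[OF Ssub] finite_boxes by blast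
  have neS: "S \<noteq> {}" using ns by (auto simp: S_def standard_def)
  define c where "c = Max S"
  have cS: "c \<in> S" using finS neS by (simp add: c_def)
  have ci: "col_incr Y \<tau> (Suc c)"
  proof (rule ccontr)
    assume "\<not> col_incr Y \<tau> (Suc c)"
    then have "Suc c \<in> S" by (simp add: S_def)
    then have "Suc c \<le> c" using finS by (simp add: c_def)
    thus False by simp
  qed
  obtain r' where rb: "(Suc r', c) \<in> boxes Y" and nd: "\<not> \<tau> (r', c) < \<tau> (Suc r', c)"
    using cS by (auto simp: S_def col_incr_def)
  define r where "r = Suc r'"
  have tab: "tableau Y \<tau>" using rs by (simp add: row_standard_def)
  have rr: "r - 1 = r'" by (simp add: r_def)
  have pb: "(r, c) \<in> boxes Y" using rb by (simp add: r_def)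
  interpret swc Y \<tau> r c using yd rs pb by unfold_locales (auto simp: r_def)
  define i where "i = \<tau> (r, c)"
  define j where "j = \<tau> (r', c)"
  have qb': "(r', c) \<in> boxes Y" using qb rr by simp
  have "i \<noteq> j" using tab_inj[OF tab] pb qb' by (auto simp: i_def j_def r_def dest: inj_onD)
  then have ij: "i < j" using nd by (simp add: i_def j_def r_def)
  have rsr: "\<And>a b. (a, Suc b) \<in> boxes Y \<Longrightarrow> \<tau> (a, b) < \<tau> (a, Suc b)" using rs by (simp add: row_standard_def)
  have cg: "\<And>s t. (t, Suc c) \<in> boxes Y \<Longrightarrow> s < t \<Longrightarrow> \<tau> (s, Suc c) < \<tau> (t, Suc c)"
    using col_incr_global[OF yd ci] by blast
  have c2a: "(r, Suc c) \<in> boxes Y \<Longrightarrow> \<tau> (r - 1, c) < \<tau> (r, Suc c)"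
  proof -
    assume a: "(r, Suc c) \<in> boxes Y"
    then have "(r', Suc c) \<in> boxes Y" using young_down[OF yd a] by (simp add: r_def)
    then have "\<tau> (r', c) < \<tau> (r', Suc c)" using rsr by blast
    also have "\<dots> < \<tau> (r, Suc c)" using cg[OF a] by (simp add: r_def)
    finally show ?thesis using rr by simp
  qed
  have c2b: "(r - 1, Suc c) \<in> boxes Y \<Longrightarrow> i < \<tau> (r - 1, Suc c)"
    using rsr[of r' c] rr ij by (simp add: j_def)
  have Keq: "K Y \<tau> (r, c) (s, c) \<longleftrightarrow> K Y \<tau> (r', c) (s, c)" if sn1: "s \<noteq> r" and sn2: "s \<noteq> r'" for s
  proof -
    have rb2: "(r, Suc c) \<in> boxes Y \<Longrightarrow> (r', Suc c) \<in> boxes Y" using young_down[OF yd] by (simp add: r_def)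
    consider "s < r'" | "r < s" using sn1 sn2 unfolding r_def by linarith
    then show ?thesis
    proof cases
      case 1
      then have "s < r" by (simp add: r_def)
      then show ?thesis using 1 cg rb2 by (auto simp: K_def)
    next
      case 2
      then have r's: "r' < s" by (simp add: r_def)
      have A: "(s, Suc c) \<in> boxes Y \<Longrightarrow> (r, Suc c) \<in> boxes Y \<and> (r', Suc c) \<in> boxes Y"
        using young_down[OF yd, of s "Suc c"] 2 r's by auto
      have A2: "(s, Suc c) \<in> boxes Y \<Longrightarrow> \<tau> (r, Suc c) < \<tau> (s, Suc c) \<and> \<tau> (r', Suc c) < \<tau> (s, Suc c)"
        using cg 2 r's by blast
      show ?thesis using 2 r's A A2 by (auto simp: K_def)
    qed
  qed
  have Kpq: "K Y \<tau> (r, c) (r', c)"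
    using cg[of r "r'"] by (auto simp: K_def r_def)
  have c3: "\<forall>k \<in> col_entries Y \<tau> c. min i j < k \<and> k < max i j \<longrightarrow>
             (is_inversion Y \<tau> (min i j) k \<noteq> is_inversion Y \<tau> k (max i j))"
  proof (intro ballI impI)
    fix k assume kc: "k \<in> col_entries Y \<tau> c" and kb: "min i j < k \<and> k < max i j"
    then obtain s where sb: "(s, c) \<in> boxes Y" and ks: "k = \<tau> (s, c)" by (auto simp: col_entries_def)
    have sn: "s \<noteq> r" "s \<noteq> r'" using kb ks by (auto simp: i_def j_def)
    have "K Y \<tau> (s, c) (r', c) \<or> K Y \<tau> (r', c) (s, c)" using K_total[OF tab sb qb'] sn by simp
    then have Kkq: "K Y \<tau> (s, c) (r', c) \<longleftrightarrow> \<not> K Y \<tau> (r', c) (s, c)" by (meson K_asym)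
    have ik: "i < k \<and> k < j" using kb ij by (simp add: min_def max_def)
    have "is_inversion Y \<tau> i k \<longleftrightarrow> K Y \<tau> (r, c) (s, c)"
      using is_inv_box[OF tab pb sb] ik ks pb sb by (simp add: i_def inv_K)
    moreover have "is_inversion Y \<tau> k j \<longleftrightarrow> K Y \<tau> (s, c) (r', c)"
      using is_inv_box[OF tab sb qb'] ik ks qb' sb by (simp add: j_def inv_K)
    ultimately show "is_inversion Y \<tau> (min i j) k \<noteq> is_inversion Y \<tau> k (max i j)"
      using ij Keq[OF sn] Kkq by (simp add: min_def max_def)
  qed
  have X: "(r, c) \<in> boxes Y \<and> \<tau> (r, c) = i \<and> 0 < r \<and>
      ((r, Suc c) \<in> boxes Y \<longrightarrow> \<tau> (r - 1, c) < \<tau> (r, Suc c)) \<and>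
      ((r - 1, Suc c) \<in> boxes Y \<longrightarrow> i < \<tau> (r - 1, Suc c)) \<and>
      (\<forall>k\<in>col_entries Y \<tau> c. min i (\<tau> (r - 1, c)) < k \<and> k < max i (\<tau> (r - 1, c)) \<longrightarrow>
          (is_inversion Y \<tau> (min i (\<tau> (r - 1, c))) k \<noteq> is_inversion Y \<tau> k (max i (\<tau> (r - 1, c)))))"
    using pb rpos c2a c2b c3 rr by (simp add: i_def j_def)
  have c3': "\<forall>k\<in>col_entries Y \<tau> c. min (\<tau> (r, c)) (\<tau> (r - 1, c)) < k \<and> k < max (\<tau> (r, c)) (\<tau> (r - 1, c)) \<longrightarrow>
          (is_inversion Y \<tau> (min (\<tau> (r, c)) (\<tau> (r - 1, c))) k \<noteq> is_inversion Y \<tau> k (max (\<tau> (r, c)) (\<tau> (r - 1, c))))"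
    using X unfolding i_def by blast
  have inD: "\<tau> \<in> D Y i"
    unfolding D_def Let_def mem_Collect_eq using rs X by blast
  have de: "delta Y i \<tau> = \<sigma>" using delta_eq i_def by simp
  have rsig: "row_standard Y \<sigma>" using sigma_rs c2a c2b by (simp add: i_def)
  have H3: "\<And>k. k \<in> boxes Y \<Longrightarrow> snd k = c \<Longrightarrow> k \<notin> {(r, c), (r - 1, c)} \<Longrightarrow>
      min (\<tau> (r, c)) (\<tau> (r - 1, c)) < \<tau> k \<Longrightarrow> \<tau> k < max (\<tau> (r, c)) (\<tau> (r - 1, c)) \<Longrightarrow>
      (K Y \<tau> (r, c) k \<longleftrightarrow> K Y \<tau> (r - 1, c) k)"
    using H3_from_D[OF c3'] by blast
  have "int (n_inv Y \<sigma>) - int (n_inv Y \<tau>) = -1"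
    using change[OF H3] ij Kpq by (simp add: i_def j_def r_def)
  then have "n_inv Y \<sigma> + 1 = n_inv Y \<tau>" by linarith
  thus ?thesis using inD de rsig sigma_st by auto
qed


lemma delta_seq_snoc:
  "delta_seq Y ws (delta Y i \<tau>) \<sigma> \<Longrightarrow> \<tau> \<in> D Y i \<Longrightarrow> delta_seq Y (ws @ [i]) \<tau> \<sigma>"
proof (induction ws arbitrary: \<sigma>)
  case Nil then show ?case by auto
next
  case (Cons w ws)
  then obtain \<rho> where "delta_seq Y ws (delta Y i \<tau>) \<rho>" "\<rho> \<in> D Y w" "\<sigma> = delta Y w \<rho>" by auto
  then show ?case using Cons.IH Cons.prems(2) by auto
qed

lemma exist_seq:
  assumes "young_diagram Y" "row_standard Y \<tau>"
  shows "\<exists>ws. delta_seq Y ws \<tau> (st Y \<tau>) \<and> length ws = n_inv Y \<tau> \<and> n_inv Y (st Y \<tau>) = 0"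
  using assms(2)
proof (induction "n_inv Y \<tau>" arbitrary: \<tau> rule: less_induct)
  case less
  show ?case
  proof (cases "standard Y \<tau>")
    case True
    have tab: "tableau Y \<tau>" using less.prems by (simp add: row_standard_def)
    have "st Y \<tau> = \<tau>" using standard_st[OF assms(1) True tab] .
    moreover have "n_inv Y \<tau> = 0" using standard_ninv[OF assms(1) True] .
    ultimately show ?thesis by (intro exI[of _ "[]"]) simp
  next
    case False
    obtain i where i: "\<tau> \<in> D Y i" "n_inv Y (delta Y i \<tau>) + 1 = n_inv Y \<tau>"
      "row_standard Y (delta Y i \<tau>)" "st Y (delta Y i \<tau>) = st Y \<tau>"
      using exist_step[OF assms(1) less.prems False] by blast
    obtain ws where ws: "delta_seq Y ws (delta Y i \<tau>) (st Y (delta Y i \<tau>))"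
      "length ws = n_inv Y (delta Y i \<tau>)" "n_inv Y (st Y (delta Y i \<tau>)) = 0"
      using less.hyps[OF _ i(3)] i(2) by force
    have "delta_seq Y (ws @ [i]) \<tau> (st Y \<tau>)" using delta_seq_snoc[OF _ i(1)] ws(1) i(4) by simp
    thus ?thesis using ws i by (intro exI[of _ "ws @ [i]"]) simp
  qed
qed

lemma lower_bound:
  assumes "young_diagram Y"
  shows "delta_seq Y ws \<tau> \<sigma> \<Longrightarrow> n_inv Y \<tau> \<le> length ws + n_inv Y \<sigma>"
proof (induction ws arbitrary: \<sigma>)
  case Nil then show ?case by simp
next
  case (Cons w ws)
  then obtain \<rho> where r: "delta_seq Y ws \<tau> \<rho>" "\<rho> \<in> D Y w" "\<sigma> = delta Y w \<rho>" by auto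
  have "n_inv Y \<rho> \<le> n_inv Y \<sigma> + 1" using D_step[OF assms r(2)] r(3) by simp
  thus ?case using Cons.IH[OF r(1)] by simp
qed

theorem proposition2p2:
  fixes Y :: "nat list" and \<tau> :: tableau
  assumes "young_diagram Y" and "row_standard Y \<tau>"
  shows "(\<exists>ws. delta_seq Y ws \<tau> (st Y \<tau>) \<and> length ws = n_inv Y \<tau>) \<and>
         (\<forall>ws. delta_seq Y ws \<tau> (st Y \<tau>) \<longrightarrow> n_inv Y \<tau> \<le> length ws)"
proof -
  obtain ws0 where w: "delta_seq Y ws0 \<tau> (st Y \<tau>)" "length ws0 = n_inv Y \<tau>" "n_inv Y (st Y \<tau>) = 0"
    using exist_seq[OF assms] by blast
  show ?thesis using w lower_bound[OF assms(1)] by fastforce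
qed


end
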